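(* Let $s,t$ be real numbers with $t\ge s>0$, let $n\ge 3$, and let $A=(a_{ij}) \in \mathcal{G}_s^{n\times n}([0,t])$. Then for every $k\in\{2,3,\dots,n-1\}$, $$\Big| (a_{11}a_{2k} - s\,a_{1k})\,H_{k+1}(A) - (a_{11}a_{2,k+1} - s\,a_{1,k+1})\, s\, H_{k+2}(A)\Big| \le t^2 M_{n-k} + t s^2 M_{n-k-1},$$ and, if $n$ is even, $$\big| (a_{11}a_{2n} - s\,a_{1n})\,H_{n+1}(A)\big| \le t^2 M_0.$$
   Context: For a real number $s$, a positive integer $n$ and a set $P \subseteq \mathbb{R}$, $\mathcal{G}_s^{n\times n}(P)$ denotes the set of all $n\times n$ real upper Hessenberg matrices $A=(a_{ij})$ with $a_{i+1,i} = s$ for $1\le i\le n-1$, $a_{ij}=0$ for $i > j+1$, and $a_{ij}\in P$ for all $i \le j$. For $m\ge 1$, $M_m$ is the maximum of $|\det B|$ over $B\in\mathcal{G}_s^{m\times m}([0,t])$, and $M_0 := 1$. For an $n\times n$ matrix $A$ and $1\le k\le n$, $H_k(A)$ is the determinant of the bottom-right $(n+1-k)\times(n+1-k)$ submatrix of $A$ (rows and columns $k,\dots,n$), and $H_{n+1}(A):=1$. *)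

theory Defs
  imports Complex_Main "Jordan_Normal_Form.Determinant"
begin

(* Matrices of varying size are functions nat => nat => real, indexed from 1. *)

definition detn :: "nat \<Rightarrow> (nat \<Rightarrow> nat \<Rightarrow> real) \<Rightarrow> real" where
  "detn m B = det (mat m m (\<lambda>(i, j). B (i + 1) (j + 1)))"

definition hessG :: "real \<Rightarrow> nat \<Rightarrow> real set \<Rightarrow> (nat \<Rightarrow> nat \<Rightarrow> real) \<Rightarrow> bool" where
  "hessG s n P A \<longleftrightarrow>
     (\<forall>i\<in>{1..n}. \<forall>j\<in>{1..n}.
        (i = j + 1 \<longrightarrow> A i j = s) \<and> (i > j + 1 \<longrightarrow> A i j = 0) \<and> (i \<le> j \<longrightarrow> A i j \<in> P))"

definition Mmax :: "real \<Rightarrow> real \<Rightarrow> nat \<Rightarrow> real" where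
  "Mmax s t m = (if m = 0 then 1 else Sup {\<bar>detn m B\<bar> | B. hessG s m {0..t} B})"

definition Hk :: "nat \<Rightarrow> (nat \<Rightarrow> nat \<Rightarrow> real) \<Rightarrow> nat \<Rightarrow> real" where
  "Hk n A k = (if k = n + 1 then 1 else detn (n + 1 - k) (\<lambda>i j. A (i + k - 1) (j + k - 1)))"

end

theory Submission
  imports Defs
begin

definition shiftm :: "(nat \<Rightarrow> nat \<Rightarrow> real) \<Rightarrow> nat \<Rightarrow> nat \<Rightarrow> real" where
  "shiftm B = (\<lambda>i j. B (i+1) (j+1))"
definition minor21 :: "(nat \<Rightarrow> nat \<Rightarrow> real) \<Rightarrow> nat \<Rightarrow> nat \<Rightarrow> real" where
  "minor21 B = (\<lambda>i j. if i = 1 then B 1 (j+1) else B (i+1) (j+1))"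

lemma detn_0: "detn 0 B = 1"
  unfolding detn_def det_def by simp

lemma detn_1: "detn 1 B = B 1 1"
  unfolding detn_def by (subst det_single) auto

lemma detn_cong: assumes "\<And>i j. 1 \<le> i \<Longrightarrow> i \<le> m \<Longrightarrow> 1 \<le> j \<Longrightarrow> j \<le> m \<Longrightarrow> B i j = C i j"
  shows "detn m B = detn m C"
  unfolding detn_def
  by (rule arg_cong[where f=det], rule eq_matI) (auto simp: assms)

lemma detn_zero_row: assumes "m \<ge> 1" "\<And>j. j \<ge> 1 \<Longrightarrow> B 1 j = 0" shows "detn m B = 0"
proof -
  let ?M = "mat m m (\<lambda>(i, j). B (i + 1) (j + 1))"
  have "det ?M = (\<Sum>j<m. ?M $$ (0,j) * cofactor ?M 0 j)"
    by (rule laplace_expansion_row) (use assms in auto)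
  also have "\<dots> = 0"
  proof (rule sum.neutral, rule ballI)
    fix j assume "j \<in> {..<m}"
    hence "?M $$ (0,j) = 0" using assms(2)[of "j+1"] assms(1) by simp
    thus "?M $$ (0,j) * cofactor ?M 0 j = 0" by simp
  qed
  finally show ?thesis unfolding detn_def .
qed

lemma detn_expand:
  assumes m: "m \<ge> 2" and b21: "B 2 1 = s" and bz: "\<And>i. 3 \<le> i \<Longrightarrow> i \<le> m \<Longrightarrow> B i 1 = 0"
  shows "detn m B = B 1 1 * detn (m-1) (shiftm B) - s * detn (m-1) (minor21 B)"
proof -
  let ?M = "mat m m (\<lambda>(i, j). B (i + 1) (j + 1))"
  have "det ?M = (\<Sum>i<m. ?M $$ (i,0) * cofactor ?M i 0)"
    by (rule laplace_expansion_column) (use assms in auto)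
  also have "\<dots> = (\<Sum>i\<in>{0,1}. ?M $$ (i,0) * cofactor ?M i 0)"
  proof (rule sum.mono_neutral_right)
    show "\<forall>i\<in>{..<m} - {0, 1}. ?M $$ (i, 0) * cofactor ?M i 0 = 0"
    proof
      fix i assume "i \<in> {..<m} - {0, 1}"
      hence "?M $$ (i,0) = 0" using bz[of "i+1"] m by auto
      thus "?M $$ (i, 0) * cofactor ?M i 0 = 0" by simp
    qed
  qed (use m in auto)
  also have "\<dots> = B 1 1 * det (mat_delete ?M 0 0) - s * det (mat_delete ?M 1 0)"
    using m b21 by (simp add: cofactor_def numeral_2_eq_2)
  also have "mat_delete ?M 0 0 = mat (m-1) (m-1) (\<lambda>(i, j). shiftm B (i + 1) (j + 1))"
    unfolding mat_delete_def shiftm_def by (rule eq_matI) auto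
  also have "mat_delete ?M 1 0 = mat (m-1) (m-1) (\<lambda>(i, j). minor21 B (i + 1) (j + 1))"
    unfolding mat_delete_def minor21_def by (rule eq_matI) auto
  finally show ?thesis unfolding detn_def .
qed

lemma hessG_D: assumes "hessG s n P A" "1 \<le> i" "i \<le> n" "1 \<le> j" "j \<le> n"
  shows "(i = j+1 \<longrightarrow> A i j = s) \<and> (i > j+1 \<longrightarrow> A i j = 0) \<and> (i \<le> j \<longrightarrow> A i j \<in> P)"
  using assms unfolding hessG_def by auto

lemma hessG_shift: assumes "hessG s m P B" shows "hessG s (m-1) P (shiftm B)"
  unfolding hessG_def shiftm_def
  apply (intro ballI)
  subgoal for i j using hessG_D[OF assms, of "i+1" "j+1"] by auto
  done

lemma hessG_minor21: "hessG s m P B \<Longrightarrow> hessG s (m-1) P (minor21 B)"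
  unfolding hessG_def minor21_def
  apply (intro ballI)
  subgoal for i j
    apply (cases "i = 1")
    subgoal by (drule bspec[of _ _ 1]; force)
    subgoal by (drule bspec[of _ _ "i+1"]; force)
    done
  done

lemma hessG_expand_conds:
  assumes "hessG s m P B" "m \<ge> 2"
  shows "B 2 1 = s" "\<And>i. 3 \<le> i \<Longrightarrow> i \<le> m \<Longrightarrow> B i 1 = 0"
  using hessG_D[OF assms(1), of 2 1] assms(2) apply simp
  subgoal for i using hessG_D[OF assms(1), of i 1] by auto
  done

lemma detn_bound:
  assumes "hessG s m {0..t} B" "0 \<le> s" "0 \<le> t"
  shows "\<bar>detn m B\<bar> \<le> (s + t) ^ m"
  using assms(1)
proof (induction m arbitrary: B rule: less_induct)
  case (less m)
  show ?case
  proof (cases "m \<ge> 2")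
    case True
    have e: "detn m B = B 1 1 * detn (m-1) (shiftm B) - s * detn (m-1) (minor21 B)"
      by (rule detn_expand) (use hessG_expand_conds[OF less.prems True] True in auto)
    have b11: "0 \<le> B 1 1" "B 1 1 \<le> t" using less.prems True unfolding hessG_def by auto
    have i1: "\<bar>detn (m-1) (shiftm B)\<bar> \<le> (s+t)^(m-1)"
      using less.IH[of "m-1"] hessG_shift[OF less.prems] True by auto
    have i2: "\<bar>detn (m-1) (minor21 B)\<bar> \<le> (s+t)^(m-1)"
      using less.IH[of "m-1"] hessG_minor21[OF less.prems] True by auto
    have "\<bar>detn m B\<bar> \<le> \<bar>B 1 1\<bar> * \<bar>detn (m-1) (shiftm B)\<bar> + s * \<bar>detn (m-1) (minor21 B)\<bar>"
      unfolding e using assms(2) abs_triangle_ineq4[of "B 1 1 * detn (m-1) (shiftm B)" "s * detn (m-1) (minor21 B)"]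
      by (simp add: abs_mult)
    also have "\<dots> \<le> t * (s+t)^(m-1) + s * (s+t)^(m-1)"
      apply (intro add_mono mult_mono mult_left_mono i1 i2) using b11 assms(2,3) by auto
    also have "\<dots> = (s+t)^m" using True
      by (metis Suc_diff_1 add.commute distrib_right less_le_trans pos2 power_Suc)
    finally show ?thesis .
  next
    case False
    then consider "m = 0" | "m = 1" by linarith
    then show ?thesis
    proof cases
      case 1 then show ?thesis by (simp add: detn_0)
    next
      case 2 then show ?thesis using hessG_D[OF less.prems, of 1 1] assms(2) detn_1[of B] by auto
    qed
  qed
qed

lemma le_Mmax:
  assumes "hessG s m {0..t} B" "0 \<le> s" "0 \<le> t"
  shows "\<bar>detn m B\<bar> \<le> Mmax s t m"
proof (cases "m = 0")
  case True then show ?thesis by (simp add: Mmax_def detn_0)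
next
  case False
  have "bdd_above {\<bar>detn m B\<bar> | B. hessG s m {0..t} B}"
    using detn_bound[OF _ assms(2,3)] by (auto intro!: bdd_aboveI)
  then show ?thesis using False assms(1) unfolding Mmax_def by (auto intro!: cSup_upper)
qed

definition zhess :: "real \<Rightarrow> nat \<Rightarrow> nat \<Rightarrow> real" where
  "zhess s = (\<lambda>i j. if i = j + 1 then s else 0)"

lemma hessG_zhess: "0 \<le> t \<Longrightarrow> hessG s m {0..t} (zhess s)"
  unfolding hessG_def zhess_def by auto

lemma Mmax_nonneg: assumes "0 \<le> s" "0 \<le> t" shows "0 \<le> Mmax s t m"
  using le_Mmax[OF hessG_zhess[OF assms(2)] assms, of m] by linarith

lemma Mmax_ge:
  assumes s: "0 \<le> s" and t: "0 \<le> t" and m: "m \<ge> 1"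
  shows "t * Mmax s t (m-1) \<le> Mmax s t m"
proof (cases "m = 1")
  case True
  have "hessG s 1 {0..t} (\<lambda>_ _. t)" unfolding hessG_def using t by auto
  from le_Mmax[OF this s t] have "\<bar>t\<bar> \<le> Mmax s t 1" by (simp only: detn_1)
  then show ?thesis using True t by (simp add: Mmax_def)
next
  case False
  hence m2: "m \<ge> 2" using m by auto
  show ?thesis
  proof (cases "t = 0")
    case True then show ?thesis using Mmax_nonneg[OF s t] by simp
  next
    case False
    hence tp: "t > 0" using t by auto
    have key: "t * \<bar>detn (m-1) B'\<bar> \<le> Mmax s t m" if hB': "hessG s (m-1) {0..t} B'" for B'
    proof -
      define B where "B = (\<lambda>i j. if i = 1 then (if j = 1 then t else 0)
          else if j = 1 then (if i = 2 then s else 0) else B' (i-1) (j-1))"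
      have hB: "hessG s m {0..t} B"
        using t unfolding hessG_def B_def
        apply (intro ballI)
        subgoal premises prems for i j
        proof (cases "i = 1 \<or> j = 1")
          case True then show ?thesis using prems t by auto
        next
          case False
          with prems have r: "1 \<le> i-1" "i-1 \<le> m-1" "1 \<le> j-1" "j-1 \<le> m-1" by auto
          have e1: "(i = j + 1) = (i-1 = (j-1)+1)" "(i > j+1) = (i-1 > (j-1)+1)" "(i \<le> j) = (i-1 \<le> j-1)"
            using r by auto
          show ?thesis using hessG_D[OF hB' r] False unfolding e1 by auto
        qed
        done
      have e: "detn m B = B 1 1 * detn (m-1) (shiftm B) - s * detn (m-1) (minor21 B)"
        by (rule detn_expand) (use hessG_expand_conds[OF hB m2] m2 in auto)
      have "detn (m-1) (minor21 B) = 0"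
        by (rule detn_zero_row) (use m2 in \<open>auto simp: minor21_def B_def\<close>)
      moreover have "detn (m-1) (shiftm B) = detn (m-1) B'"
        by (rule detn_cong) (auto simp: shiftm_def B_def)
      moreover have "B 1 1 = t" unfolding B_def by simp
      ultimately have "detn m B = t * detn (m-1) B'" using e by simp
      thus ?thesis using le_Mmax[OF hB s t] t by (simp add: abs_mult)
    qed
    let ?S = "{\<bar>detn (m-1) B\<bar> | B. hessG s (m-1) {0..t} B}"
    have ne: "?S \<noteq> {}" using hessG_zhess[OF t, of s "m-1"] by blast
    have "Sup ?S \<le> Mmax s t m / t"
    proof (rule cSup_least[OF ne])
      fix x assume "x \<in> ?S"
      then obtain B' where x: "x = \<bar>detn (m-1) B'\<bar>" and hB': "hessG s (m-1) {0..t} B'" by blast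
      show "x \<le> Mmax s t m / t" using key[OF hB'] tp unfolding x by (simp add: pos_le_divide_eq mult.commute)
    qed
    moreover have "Mmax s t (m-1) = Sup ?S" using m2 by (simp add: Mmax_def)
    ultimately have "Mmax s t (m-1) \<le> Mmax s t m / t" by simp
    thus ?thesis using tp by (simp add: pos_le_divide_eq mult.commute)
  qed
qed

lemma lin_bound:
  fixes a b lo hi y T :: real
  assumes "lo \<le> y" "y \<le> hi" "\<bar>a + b*lo\<bar> \<le> T" "\<bar>a + b*hi\<bar> \<le> T"
  shows "\<bar>a + b*y\<bar> \<le> T"
proof (cases "b \<ge> 0")
  case True
  have "b*lo \<le> b*y" "b*y \<le> b*hi" using True assms(1,2) by (auto intro: mult_left_mono)
  then show ?thesis using assms(3,4) by (simp add: abs_le_iff)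
next
  case False
  have "b*y \<le> b*lo" "b*hi \<le> b*y" using False assms(1,2) by (auto intro: mult_left_mono_neg)
  then show ?thesis using assms(3,4) by (simp add: abs_le_iff)
qed

lemma final_arith:
  fixes s t X Y H1 H2 P Q :: real
  assumes s: "0 < s" "s \<le> t"
    and X: "-(s*t) \<le> X" "X \<le> t^2" and Y: "-(s*t) \<le> Y" "Y \<le> t^2"
    and h1: "\<bar>H1\<bar> \<le> Q" and h2: "\<bar>H2\<bar> \<le> P"
    and c: "t * \<bar>H1 - s*H2\<bar> \<le> t*Q + s^2*P" and d: "t*P \<le> Q" and P: "0 \<le> P"
  shows "\<bar>X*H1 - Y*s*H2\<bar> \<le> t^2 * Q + t * s^2 * P"
proof -
  have t: "0 \<le> t" using s by linarith
  have eq: "X*H1 - Y*s*H2 = X*H1 + (-(s*H2))*Y" by simp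
  have absX: "\<bar>X\<bar> \<le> t^2"
  proof -
    have "s*t \<le> t*t" using s t by (intro mult_right_mono) auto
    thus ?thesis using X by (simp add: abs_le_iff power2_eq_square)
  qed
  have A1: "\<bar>X*H1 + (-(s*H2))*(-(s*t))\<bar> \<le> t^2 * Q + t * s^2 * P"
  proof -
    have "\<bar>X*H1\<bar> \<le> t^2 * Q" unfolding abs_mult
      by (rule mult_mono[OF absX h1]) (use P d t in auto)
    moreover have "\<bar>(-(s*H2))*(-(s*t))\<bar> = t*s^2*\<bar>H2\<bar>"
      using s t by (simp add: abs_mult power2_eq_square)
    moreover have "t*s^2*\<bar>H2\<bar> \<le> t*s^2*P" using h2 s t by (intro mult_left_mono) auto
    ultimately show ?thesis by (smt (verit) abs_triangle_ineq)
  qed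
  have A2: "\<bar>X*H1 + (-(s*H2))*(t^2)\<bar> \<le> t^2 * Q + t * s^2 * P"
  proof -
    have eq2: "X*H1 + (-(s*H2))*(t^2) = (-(s*H2*t^2)) + H1 * X" by simp
    have B1: "\<bar>(-(s*H2*t^2)) + H1 * (-(s*t))\<bar> \<le> t^2 * Q + t * s^2 * P"
    proof -
      have "\<bar>(-(s*H2*t^2)) + H1 * (-(s*t))\<bar> \<le> s*t^2*\<bar>H2\<bar> + s*t*\<bar>H1\<bar>"
        using s t by (smt (verit) abs_mult abs_triangle_ineq mult.commute mult_minus_right abs_minus_cancel
              abs_of_nonneg zero_le_power2 mult_nonneg_nonneg mult.assoc)
      also have "\<dots> \<le> s*t^2*P + s*t*Q"
        using h1 h2 s t by (intro add_mono mult_left_mono) auto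
      also have "\<dots> \<le> t^2 * Q + t * s^2 * P"
      proof -
        have "0 \<le> t*(t-s)*(Q - s*P)"
        proof -
          have "s*P \<le> t*P" using s P by (intro mult_right_mono) auto
          thus ?thesis using s t d by (intro mult_nonneg_nonneg) auto
        qed
        thus ?thesis by (simp add: algebra_simps power2_eq_square)
      qed
      finally show ?thesis .
    qed
    have B2: "\<bar>(-(s*H2*t^2)) + H1 * (t^2)\<bar> \<le> t^2 * Q + t * s^2 * P"
    proof -
      have "(-(s*H2*t^2)) + H1 * (t^2) = t * (t * (H1 - s*H2))" by (simp add: algebra_simps power2_eq_square)
      hence "\<bar>(-(s*H2*t^2)) + H1 * (t^2)\<bar> = t * (t * \<bar>H1 - s*H2\<bar>)" using t by (simp add: abs_mult)
      also have "\<dots> \<le> t * (t*Q + s^2*P)" using c t by (intro mult_left_mono) auto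
      finally show ?thesis by (simp add: algebra_simps power2_eq_square)
    qed
    show ?thesis unfolding eq2 by (rule lin_bound[OF X B1 B2])
  qed
  show ?thesis unfolding eq by (rule lin_bound[OF Y A1 A2])
qed

lemma c_arith:
  fixes c s t K H2 P Q :: real
  assumes c: "0 \<le> c" "c \<le> t" and s: "0 < s" "s \<le> t"
    and k: "\<bar>K\<bar> \<le> P" and h2: "\<bar>H2\<bar> \<le> P" and q: "\<bar>(t-s)*H2 - s*K\<bar> \<le> Q"
    and d: "t*P \<le> Q" and P: "0 \<le> P"
  shows "t * \<bar>(c*H2 - s*K) - s*H2\<bar> \<le> t*Q + s^2*P"
proof -
  have t: "0 \<le> t" using s by linarith
  have eq: "t * ((c*H2 - s*K) - s*H2) = c*((t-s)*H2 - s*K) + (t-c)*(-(s*H2) - s*K)"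
    by (simp add: algebra_simps)
  have "\<bar>-(s*H2) - s*K\<bar> \<le> 2*s*P"
  proof -
    have "-(s*H2) - s*K = -(s*(H2+K))" by (simp add: algebra_simps)
    hence "\<bar>-(s*H2) - s*K\<bar> = s*\<bar>H2+K\<bar>" using s by (simp add: abs_mult)
    also have "\<dots> \<le> s*(2*P)" using s h2 k abs_triangle_ineq[of H2 K] by (intro mult_left_mono) auto
    finally show ?thesis by simp
  qed
  hence "\<bar>c*((t-s)*H2 - s*K) + (t-c)*(-(s*H2) - s*K)\<bar> \<le> c*Q + (t-c)*(2*s*P)"
  proof -
    assume b: "\<bar>-(s*H2) - s*K\<bar> \<le> 2*s*P"
    have "\<bar>c*((t-s)*H2 - s*K) + (t-c)*(-(s*H2) - s*K)\<bar> \<le> \<bar>c*((t-s)*H2 - s*K)\<bar> + \<bar>(t-c)*(-(s*H2) - s*K)\<bar>"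
      by (rule abs_triangle_ineq)
    also have "\<dots> = c*\<bar>(t-s)*H2 - s*K\<bar> + (t-c)*\<bar>-(s*H2) - s*K\<bar>" using c by (simp add: abs_mult)
    also have "\<dots> \<le> c*Q + (t-c)*(2*s*P)" using c q b by (intro add_mono mult_left_mono) auto
    finally show ?thesis .
  qed
  also have "\<dots> \<le> t*Q + s^2*P"
  proof (cases "2*s*P \<le> Q")
    case True
    have "(t-c)*(2*s*P) \<le> (t-c)*Q" using True c by (intro mult_left_mono) auto
    moreover have "0 \<le> s^2*P" using P by simp
    ultimately show ?thesis by (simp add: algebra_simps)
  next
    case False
    have "(t-c)*(2*s*P - Q) \<le> t*(2*s*P - Q)" using False c by (intro mult_right_mono) auto
    moreover have "t*(2*s*P - Q) \<le> s^2*P"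
    proof -
      have "t*Q \<ge> t*(t*P)" using d t by (intro mult_left_mono) auto
      moreover have "2*s*t*P \<le> (t^2 + s^2)*P"
      proof -
        have "0 \<le> (t-s)^2" by simp
        hence "2*s*t \<le> t^2 + s^2" by (simp add: power2_diff algebra_simps)
        thus ?thesis using P by (intro mult_right_mono) auto
      qed
      ultimately show ?thesis by (simp add: algebra_simps power2_eq_square)
    qed
    ultimately show ?thesis by (simp add: algebra_simps)
  qed
  finally show ?thesis unfolding eq[symmetric] using t by (simp add: abs_mult)
qed

theorem lemma3p2:
  fixes s t :: real and n :: nat and A :: "nat \<Rightarrow> nat \<Rightarrow> real"
  assumes "s > 0" and "t \<ge> s" and "n \<ge> 3"
    and "hessG s n {0..t} A"
  shows "(\<forall>k\<in>{2..n-1}.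
            \<bar>(A 1 1 * A 2 k - s * A 1 k) * Hk n A (k + 1)
               - (A 1 1 * A 2 (k + 1) - s * A 1 (k + 1)) * s * Hk n A (k + 2)\<bar>
            \<le> t^2 * Mmax s t (n - k) + t * s^2 * Mmax s t (n - k - 1))
         \<and> (even n \<longrightarrow> \<bar>(A 1 1 * A 2 n - s * A 1 n) * Hk n A (n + 1)\<bar> \<le> t^2 * Mmax s t 0)"
proof -
  have s0: "0 \<le> s" and t0: "0 \<le> t" using assms(1,2) by linarith+
  note hA = assms(4)
  have entry: "0 \<le> A i j \<and> A i j \<le> t" if "1 \<le> i" "i \<le> j" "j \<le> n" for i j
    using hessG_D[OF hA, of i j] that by auto
  have Xb: "-(s*t) \<le> A 1 1 * A 2 j - s * A 1 j \<and> A 1 1 * A 2 j - s * A 1 j \<le> t^2"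
    if "2 \<le> j" "j \<le> n" for j
  proof -
    have a11: "0 \<le> A 1 1" "A 1 1 \<le> t" using entry[of 1 1] that by auto
    have a2j: "0 \<le> A 2 j" "A 2 j \<le> t" using entry[of 2 j] that by auto
    have a1j: "0 \<le> A 1 j" "A 1 j \<le> t" using entry[of 1 j] that by auto
    have "A 1 1 * A 2 j \<le> t * t" using a11 a2j by (intro mult_mono) auto
    moreover have "0 \<le> A 1 1 * A 2 j" using a11 a2j by simp
    moreover have "s * A 1 j \<le> s * t" using a1j s0 by (intro mult_left_mono) auto
    moreover have "0 \<le> s * A 1 j" using a1j s0 by simp
    moreover have "s * t \<le> t * t" using assms(2) t0 by (intro mult_right_mono) auto
    ultimately show ?thesis by (simp add: power2_eq_square)
  qed
  have part1: "\<bar>(A 1 1 * A 2 k - s * A 1 k) * Hk n A (k + 1)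
               - (A 1 1 * A 2 (k + 1) - s * A 1 (k + 1)) * s * Hk n A (k + 2)\<bar>
            \<le> t^2 * Mmax s t (n - k) + t * s^2 * Mmax s t (n - k - 1)" if k: "k \<in> {2..n-1}" for k
  proof -
    define m where "m = n - k"
    define C where "C = (\<lambda>i j. A (i+k) (j+k))"
    have m1: "m \<ge> 1" using k assms(3) unfolding m_def by auto
    have hC: "hessG s m {0..t} C"
      unfolding hessG_def C_def
      apply (intro ballI)
      subgoal for i j using hessG_D[OF hA, of "i+k" "j+k"] by (auto simp: m_def)
      done
    have H1eq: "Hk n A (k+1) = detn m C"
    proof -
      have "(\<lambda>i j. A (i + (k+1) - 1) (j + (k+1) - 1)) = C" by (auto simp: C_def intro!: ext)
      moreover have "n + 1 - (k+1) = m" unfolding m_def by simp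
      ultimately show ?thesis using k unfolding Hk_def by auto
    qed
    define H2 where "H2 = Hk n A (k+2)"
    define P where "P = Mmax s t (m-1)"
    define Q where "Q = Mmax s t m"
    have P0: "0 \<le> P" unfolding P_def by (rule Mmax_nonneg[OF s0 t0])
    have d: "t * P \<le> Q" unfolding P_def Q_def by (rule Mmax_ge[OF s0 t0 m1])
    have a: "\<bar>detn m C\<bar> \<le> Q" unfolding Q_def by (rule le_Mmax[OF hC s0 t0])
    have bc: "\<bar>H2\<bar> \<le> P \<and> t * \<bar>detn m C - s*H2\<bar> \<le> t*Q + s^2*P"
    proof (cases "m = 1")
      case True
      hence "k + 2 = n + 1" using k unfolding m_def by auto
      hence H21: "H2 = 1" unfolding H2_def Hk_def by simp
      have P1: "P = 1" unfolding P_def using True by (simp add: Mmax_def)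
      have c11: "0 \<le> C 1 1" "C 1 1 \<le> t" using hessG_D[OF hC, of 1 1] m1 by auto
      have dC: "detn m C = C 1 1" using True detn_1 by simp
      have "\<bar>C 1 1 - s\<bar> \<le> t" using c11 s0 assms(2) by (simp add: abs_le_iff)
      hence "t * \<bar>C 1 1 - s\<bar> \<le> t * t" using t0 by (intro mult_left_mono) auto
      also have "\<dots> \<le> t * Q" using d P1 t0 by (intro mult_left_mono) auto
      finally have f: "t * \<bar>C 1 1 - s\<bar> \<le> t*Q" .
      have g: "0 \<le> s^2 * P" using P1 by simp
      have "t * \<bar>detn m C - s*H2\<bar> \<le> t*Q + s^2*P" unfolding dC H21 mult_1_right using f g by linarith
      thus ?thesis using H21 P1 by simp
    next
      case False
      hence m2: "m \<ge> 2" using m1 by auto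
      have H2eq: "H2 = detn (m-1) (shiftm C)"
      proof -
        have "(\<lambda>i j. A (i + (k+2) - 1) (j + (k+2) - 1)) = shiftm C"
          by (auto simp: C_def shiftm_def intro!: ext)
        moreover have "n + 1 - (k+2) = m - 1" unfolding m_def by simp
        moreover have "k + 2 \<noteq> n + 1" using m2 unfolding m_def by auto
        ultimately show ?thesis unfolding H2_def Hk_def by auto
      qed
      define K where "K = detn (m-1) (minor21 C)"
      have eC: "detn m C = C 1 1 * H2 - s * K"
        unfolding H2eq K_def
        by (rule detn_expand) (use hessG_expand_conds[OF hC m2] m2 in auto)
      have h2: "\<bar>H2\<bar> \<le> P" unfolding H2eq P_def by (rule le_Mmax[OF hessG_shift[OF hC] s0 t0])
      have kb: "\<bar>K\<bar> \<le> P" unfolding K_def P_def by (rule le_Mmax[OF hessG_minor21[OF hC] s0 t0])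
      define C' where "C' = (\<lambda>i j. if i = 1 \<and> j = 1 then t - s else C i j)"
      have hC': "hessG s m {0..t} C'"
        unfolding hessG_def C'_def
        apply (intro ballI)
        subgoal for i j using hessG_D[OF hC, of i j] assms(2) s0 by auto
        done
      have sh: "detn (m-1) (shiftm C') = detn (m-1) (shiftm C)"
        by (rule detn_cong) (auto simp: shiftm_def C'_def)
      have sm: "detn (m-1) (minor21 C') = detn (m-1) (minor21 C)"
        by (rule detn_cong) (auto simp: minor21_def C'_def)
      have c'11: "C' 1 1 = t - s" by (simp add: C'_def)
      have "detn m C' = C' 1 1 * detn (m-1) (shiftm C') - s * detn (m-1) (minor21 C')"
        by (rule detn_expand) (use hessG_expand_conds[OF hC' m2] m2 in auto)
      hence eC': "detn m C' = (t - s) * H2 - s * K"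
        unfolding sh sm c'11 H2eq K_def .
      have q: "\<bar>(t - s) * H2 - s * K\<bar> \<le> Q"
        unfolding eC'[symmetric] Q_def by (rule le_Mmax[OF hC' s0 t0])
      have c11: "0 \<le> C 1 1" "C 1 1 \<le> t" using hessG_D[OF hC, of 1 1] m1 by auto
      have "t * \<bar>(C 1 1 * H2 - s*K) - s*H2\<bar> \<le> t*Q + s^2*P"
        by (rule c_arith[OF c11 assms(1) assms(2) kb h2 q d P0])
      thus ?thesis using h2 eC by simp
    qed
    have Xk: "-(s*t) \<le> A 1 1 * A 2 k - s * A 1 k" "A 1 1 * A 2 k - s * A 1 k \<le> t^2"
      using Xb[of k] k by auto
    have Yk: "-(s*t) \<le> A 1 1 * A 2 (k+1) - s * A 1 (k+1)" "A 1 1 * A 2 (k+1) - s * A 1 (k+1) \<le> t^2"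
      using Xb[of "k+1"] k assms(3) by auto
    have "\<bar>(A 1 1 * A 2 k - s * A 1 k) * detn m C - (A 1 1 * A 2 (k + 1) - s * A 1 (k + 1)) * s * H2\<bar>
          \<le> t^2 * Q + t * s^2 * P"
      using bc d P0 by (intro final_arith[OF assms(1,2) Xk Yk a]) auto
    moreover have "m - 1 = n - k - 1" unfolding m_def by simp
    ultimately show ?thesis unfolding H1eq H2_def P_def Q_def m_def by simp
  qed
  have part2: "\<bar>(A 1 1 * A 2 n - s * A 1 n) * Hk n A (n + 1)\<bar> \<le> t^2 * Mmax s t 0"
  proof -
    have "Hk n A (n+1) = 1" "Mmax s t 0 = 1" by (simp_all add: Hk_def Mmax_def)
    moreover have "\<bar>A 1 1 * A 2 n - s * A 1 n\<bar> \<le> t^2"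
    proof -
      have "-(s*t) \<le> A 1 1 * A 2 n - s * A 1 n" "A 1 1 * A 2 n - s * A 1 n \<le> t^2"
        using Xb[of n] assms(3) by auto
      moreover have "s*t \<le> t^2" using assms(2) t0 by (simp add: power2_eq_square mult_right_mono)
      ultimately show ?thesis by (simp add: abs_le_iff)
    qed
    ultimately show ?thesis by simp
  qed
  show ?thesis
  proof (intro conjI ballI impI)
    fix k assume "k \<in> {2..n-1}"
    then show "\<bar>(A 1 1 * A 2 k - s * A 1 k) * Hk n A (k + 1)
               - (A 1 1 * A 2 (k + 1) - s * A 1 (k + 1)) * s * Hk n A (k + 2)\<bar>
            \<le> t^2 * Mmax s t (n - k) + t * s^2 * Mmax s t (n - k - 1)" by (rule part1)
  next
    show "\<bar>(A 1 1 * A 2 n - s * A 1 n) * Hk n A (n + 1)\<bar> \<le> t^2 * Mmax s t 0" by (rule part2)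
  qed
qed

end
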